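(* Consider the Utility Maximization problem in the MPOI world with ground set $J$, downward-closed constraints $\mathcal{F}$ with convex relaxation $P_{\mathcal{F}}$, additive objective $f(I,x)=\sum_{i\in I}x_i$, and DAG Markov systems $S_i=(V_i,P_i,s_i,T_i,\pi_i,r_i)$, $i\in J$, with non-negative values. Then the optimal utility of an adaptive strategy (without any commitment constraint) is at most the optimal value of the linear program $$\max\ \sum_{i\in J}\Big(\sum_{u\in T_i}r_i^u z_i^u-\sum_{u\in V_i\setminus T_i}\pi_i^u z_i^u\Big)$$ subject to: $y_i^{s_i}=1$ for all $i\in J$; $y_i^u=\sum_{v\in V_i}(P_i)_{vu}\,z_i^v$ for all $i\in J$, $u\in V_i\setminus\{s_i\}$; $x_i=\sum_{u\in T_i}z_i^u$ for all $i\in J$; $z_i^u\le y_i^u$ for all $i\in J$, $u\in V_i$; $x\in P_{\mathcal{F}}$; and $x_i,y_i^u,z_i^u\ge0$ for all $i\in J$, $u\in V_i$.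
   Context: A Markov system $S=(V,P,s,T,\pi,r)$ consists of a Markov chain on a finite state space $V$ with transition matrix $P$ ($P_{uv}$ is the probability of moving from $u$ to $v$), a starting state $s$, a set $T\subseteq V$ of absorbing destination states, prices $\pi^u\ge0$ for $u\in V\setminus T$, and values $r^t\ge0$ for $t\in T$; every state reaches some destination state. It is a DAG Markov system if the directed graph with an arc $u\to v$ whenever $u\notin T$ and $P_{uv}>0$ is acyclic. Utility Maximization in the MPOI world: each $S_i$ starts at $s_i$; at each step the player either advances some $S_i$ from its current non-destination state $u$, paying $\pi_i^u$ (the state then moves randomly according to $P_i$), or ends the game by selecting a set $I\in\mathcal{F}$ of ready elements (elements whose Markov system is in a destination state). The utility of an adaptive strategy is $\mathbb{E}[\sum_{i\in I}r_i^{\mathrm{dest}(i)}-\text{total price paid}]$. $P_{\mathcal{F}}\subseteq[0,1]^J$ is a convex set containing the indicator vectors of all sets in $\mathcal{F}$. (Intended meaning of variables: $y_i^u$ = probability state $u$ of $S_i$ is reached, $z_i^u$ = probability $S_i$ is played from $u$, or selected when $u\in T_i$.) *)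

theory Defs
  imports "HOL-Analysis.Analysis"
begin

definition ms_arcs :: "'s set \<Rightarrow> ('s \<Rightarrow> 's \<Rightarrow> real) \<Rightarrow> 's set \<Rightarrow> ('s \<times> 's) set" where
  "ms_arcs V P T = {(u, v). u \<in> V - T \<and> 0 < P u v}"

text \<open>A Markov system (V, P, s, T, pi, r).  States of all systems live in a common
type 's; V is the (finite) state space, P u v the transition probability from u to v.\<close>

definition markov_system ::
  "'s set \<Rightarrow> ('s \<Rightarrow> 's \<Rightarrow> real) \<Rightarrow> 's \<Rightarrow> 's set \<Rightarrow> ('s \<Rightarrow> real) \<Rightarrow> ('s \<Rightarrow> real) \<Rightarrow> bool" where
  "markov_system V P s T price val \<longleftrightarrow>
     finite V \<and> s \<in> V \<and> T \<subseteq> V \<and>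
     (\<forall>u\<in>V. \<forall>v. 0 \<le> P u v) \<and>
     (\<forall>u\<in>V. \<forall>v. v \<notin> V \<longrightarrow> P u v = 0) \<and>
     (\<forall>u\<in>V. (\<Sum>v\<in>V. P u v) = 1) \<and>
     (\<forall>t\<in>T. P t t = 1) \<and>
     (\<forall>u\<in>V - T. 0 \<le> price u) \<and>
     (\<forall>t\<in>T. 0 \<le> val t) \<and>
     (\<forall>u\<in>V. \<exists>t\<in>T. (u, t) \<in> (ms_arcs V P T)\<^sup>*)"

definition dag_markov_system ::
  "'s set \<Rightarrow> ('s \<Rightarrow> 's \<Rightarrow> real) \<Rightarrow> 's \<Rightarrow> 's set \<Rightarrow> ('s \<Rightarrow> real) \<Rightarrow> ('s \<Rightarrow> real) \<Rightarrow> bool" where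
  "dag_markov_system V P s T price val \<longleftrightarrow>
     markov_system V P s T price val \<and> acyclic (ms_arcs V P T)"

definition convex_fun_set :: "('i \<Rightarrow> real) set \<Rightarrow> bool" where
  "convex_fun_set C \<longleftrightarrow>
     (\<forall>x\<in>C. \<forall>y\<in>C. \<forall>t::real. 0 \<le> t \<and> t \<le> 1 \<longrightarrow> (\<lambda>i. t * x i + (1 - t) * y i) \<in> C)"

datatype 'i action = Advance 'i | Select "'i set"

text \<open>A history is the list of advances made so far together with the observed new states.
An adaptive (deterministic) strategy maps histories to actions.\<close>
type_synonym ('i, 's) history = "('i \<times> 's) list"
type_synonym ('i, 's) strategy = "('i, 's) history \<Rightarrow> 'i action"

definition config :: "('i \<Rightarrow> 's) \<Rightarrow> ('i, 's) history \<Rightarrow> 'i \<Rightarrow> 's" where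
  "config s h = foldl (\<lambda>c (i, v). c(i := v)) s h"

inductive_set reachable_hist ::
  "('i \<Rightarrow> 's \<Rightarrow> 's \<Rightarrow> real) \<Rightarrow> ('i \<Rightarrow> 's) \<Rightarrow> ('i, 's) strategy \<Rightarrow> ('i, 's) history set"
  for P s \<sigma> where
  Nil: "[] \<in> reachable_hist P s \<sigma>"
| Step: "h \<in> reachable_hist P s \<sigma> \<Longrightarrow> \<sigma> h = Advance i \<Longrightarrow> 0 < P i (config s h i) v
          \<Longrightarrow> h @ [(i, v)] \<in> reachable_hist P s \<sigma>"

definition valid_strategy ::
  "'i set \<Rightarrow> 'i set set \<Rightarrow> ('i \<Rightarrow> 's \<Rightarrow> 's \<Rightarrow> real) \<Rightarrow> ('i \<Rightarrow> 's) \<Rightarrow> ('i \<Rightarrow> 's set)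
     \<Rightarrow> ('i, 's) strategy \<Rightarrow> bool" where
  "valid_strategy J F P s T \<sigma> \<longleftrightarrow>
     (\<forall>h\<in>reachable_hist P s \<sigma>.
        (case \<sigma> h of
           Advance i \<Rightarrow> i \<in> J \<and> config s h i \<notin> T i
         | Select I \<Rightarrow> I \<in> F \<and> (\<forall>i\<in>I. config s h i \<in> T i)))"

fun util_fuel ::
  "('i \<Rightarrow> 's set) \<Rightarrow> ('i \<Rightarrow> 's \<Rightarrow> 's \<Rightarrow> real) \<Rightarrow> ('i \<Rightarrow> 's) \<Rightarrow> ('i \<Rightarrow> 's \<Rightarrow> real) \<Rightarrow> ('i \<Rightarrow> 's \<Rightarrow> real)
     \<Rightarrow> ('i, 's) strategy \<Rightarrow> nat \<Rightarrow> ('i, 's) history \<Rightarrow> real" where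
  "util_fuel V P s price val \<sigma> 0 h = 0"
| "util_fuel V P s price val \<sigma> (Suc n) h =
     (case \<sigma> h of
        Select I \<Rightarrow> (\<Sum>i\<in>I. val i (config s h i))
      | Advance i \<Rightarrow> - price i (config s h i)
           + (\<Sum>v\<in>V i. P i (config s h i) v * util_fuel V P s price val \<sigma> n (h @ [(i, v)])))"

text \<open>In a world of DAG Markov systems each system i can be
advanced at most card (V i) - 1 times, so a valid strategy ends the game after fewer than
the budget below; hence the budget never runs out and this is the exact expected utility.\<close>
definition utility ::
  "'i set \<Rightarrow> ('i \<Rightarrow> 's set) \<Rightarrow> ('i \<Rightarrow> 's \<Rightarrow> 's \<Rightarrow> real) \<Rightarrow> ('i \<Rightarrow> 's) \<Rightarrow> ('i \<Rightarrow> 's \<Rightarrow> real)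
     \<Rightarrow> ('i \<Rightarrow> 's \<Rightarrow> real) \<Rightarrow> ('i, 's) strategy \<Rightarrow> real" where
  "utility J V P s price val \<sigma> =
     util_fuel V P s price val \<sigma> (Suc (\<Sum>i\<in>J. card (V i))) []"

definition lp_feasible ::
  "'i set \<Rightarrow> ('i \<Rightarrow> 's set) \<Rightarrow> ('i \<Rightarrow> 's \<Rightarrow> 's \<Rightarrow> real) \<Rightarrow> ('i \<Rightarrow> 's) \<Rightarrow> ('i \<Rightarrow> 's set)
     \<Rightarrow> ('i \<Rightarrow> real) set \<Rightarrow> (('i \<Rightarrow> real) \<times> ('i \<Rightarrow> 's \<Rightarrow> real) \<times> ('i \<Rightarrow> 's \<Rightarrow> real)) set" where
  "lp_feasible J V P s T PF = {(x, y, z).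
     (\<forall>i\<in>J. y i (s i) = 1) \<and>
     (\<forall>i\<in>J. \<forall>u\<in>V i - {s i}. y i u = (\<Sum>v\<in>V i - T i. P i v u * z i v)) \<and>
     (\<forall>i\<in>J. x i = (\<Sum>u\<in>T i. z i u)) \<and>
     (\<forall>i\<in>J. \<forall>u\<in>V i. z i u \<le> y i u) \<and>
     x \<in> PF \<and>
     (\<forall>i\<in>J. 0 \<le> x i \<and> (\<forall>u\<in>V i. 0 \<le> y i u \<and> 0 \<le> z i u))}"

definition lp_objective ::
  "'i set \<Rightarrow> ('i \<Rightarrow> 's set) \<Rightarrow> ('i \<Rightarrow> 's set) \<Rightarrow> ('i \<Rightarrow> 's \<Rightarrow> real) \<Rightarrow> ('i \<Rightarrow> 's \<Rightarrow> real)
     \<Rightarrow> ('i \<Rightarrow> 's \<Rightarrow> real) \<Rightarrow> real" where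
  "lp_objective J V T price val z =
     (\<Sum>i\<in>J. (\<Sum>u\<in>T i. val i u * z i u) - (\<Sum>u\<in>V i - T i. price i u * z i u))"

end

theory Submission
  imports Defs
begin

fun occ :: "('i \<Rightarrow> 's set) \<Rightarrow> ('i \<Rightarrow> 's \<Rightarrow> 's \<Rightarrow> real) \<Rightarrow> ('i \<Rightarrow> 's) \<Rightarrow> ('i, 's) strategy
    \<Rightarrow> nat \<Rightarrow> ('i, 's) history \<Rightarrow> 'i \<Rightarrow> 's \<Rightarrow> real" where
  "occ V P s \<sigma> 0 h = (\<lambda>i u. 0)"
| "occ V P s \<sigma> (Suc n) h =
     (case \<sigma> h of
        Select I \<Rightarrow> (\<lambda>i u. if i \<in> I \<and> u = config s h i then 1 else 0)
      | Advance j \<Rightarrow> (\<lambda>i u. (if i = j \<and> u = config s h j then 1 else 0)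
           + (\<Sum>v\<in>V j. P j (config s h j) v * occ V P s \<sigma> n (h @ [(j, v)]) i u)))"

lemma config_snoc: "config s (h @ [(i, v)]) = (config s h)(i := v)"
  by (simp add: config_def)

lemma config_Nil: "config s [] = s"
  by (simp add: config_def)

lemma conv_comb:
  assumes cvx: "convex_fun_set PF" and fin: "finite A"
  shows "(\<forall>v\<in>A. 0 \<le> p v) \<longrightarrow> sum p A = 1 \<longrightarrow> (\<forall>v\<in>A. 0 < p v \<longrightarrow> f v \<in> PF)
     \<longrightarrow> (\<lambda>i. \<Sum>v\<in>A. p v * f v i) \<in> PF"
  using fin
proof (induction A arbitrary: p rule: finite_induct)
  case empty
  then show ?case by simp
next
  case (insert a A)
  show ?case
  proof (intro impI)
    assume nn: "\<forall>v\<in>insert a A. 0 \<le> p v" and s1: "sum p (insert a A) = 1"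
      and pf: "\<forall>v\<in>insert a A. 0 < p v \<longrightarrow> f v \<in> PF"
    have sA: "sum p A = 1 - p a" using s1 insert by simp
    have eq: "(\<lambda>i. \<Sum>v\<in>insert a A. p v * f v i) = (\<lambda>i. p a * f a i + (\<Sum>v\<in>A. p v * f v i))"
      using insert by simp
    show "(\<lambda>i. \<Sum>v\<in>insert a A. p v * f v i) \<in> PF"
    proof (cases "p a = 0")
      case True
      then show ?thesis using insert.IH[of p] nn sA pf eq by simp
    next
      case False
      then have pa: "0 < p a" using nn by force
      have fa: "f a \<in> PF" using pa pf by simp
      show ?thesis
      proof (cases "p a = 1")
        case True
        have "\<forall>v\<in>A. p v = 0"
          using sum_nonneg_eq_0_iff[OF insert.hyps(1), of p] nn sA True by simp
        then have "(\<lambda>i. \<Sum>v\<in>insert a A. p v * f v i) = f a"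
          using eq True by simp
        then show ?thesis using fa by simp
      next
        case False
        have pa1: "p a < 1"
        proof -
          have "0 \<le> sum p A" using nn by (simp add: sum_nonneg)
          then show ?thesis using sA False by simp
        qed
        define q where "q v = p v / (1 - p a)" for v
        have qn: "\<forall>v\<in>A. 0 \<le> q v" using nn pa1 by (simp add: q_def)
        have qs: "sum q A = 1" using sA pa1 by (simp add: q_def sum_divide_distrib[symmetric])
        have qp: "\<forall>v\<in>A. 0 < q v \<longrightarrow> f v \<in> PF" using pf pa1
          by (auto simp: q_def zero_less_divide_iff)
        have g: "(\<lambda>i. \<Sum>v\<in>A. q v * f v i) \<in> PF" using insert.IH[of q] qn qs qp by simp
        have "(\<lambda>i. p a * f a i + (1 - p a) * (\<Sum>v\<in>A. q v * f v i)) \<in> PF"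
          using cvx fa g pa pa1 unfolding convex_fun_set_def by simp
        moreover have "(\<lambda>i. p a * f a i + (1 - p a) * (\<Sum>v\<in>A. q v * f v i))
             = (\<lambda>i. \<Sum>v\<in>insert a A. p v * f v i)"
          using eq pa1 by (simp add: q_def sum_distrib_left)
        ultimately show ?thesis by simp
      qed
    qed
  qed
qed

lemma obj_lin:
  assumes "finite A"
  shows "lp_objective J V T price val (\<lambda>i u. a i u + (\<Sum>v\<in>A. c v * b v i u))
       = lp_objective J V T price val a + (\<Sum>v\<in>A. c v * lp_objective J V T price val (b v))"
  unfolding lp_objective_def
  by (simp add: algebra_simps sum.distrib sum_distrib_left sum_subtractf sum.swap[of _ A])


locale lpset =
  fixes J :: "'i set" and F :: "'i set set" and PF :: "('i \<Rightarrow> real) set"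
    and V :: "'i \<Rightarrow> 's set" and P :: "'i \<Rightarrow> 's \<Rightarrow> 's \<Rightarrow> real" and s :: "'i \<Rightarrow> 's"
    and T :: "'i \<Rightarrow> 's set" and price val :: "'i \<Rightarrow> 's \<Rightarrow> real"
    and \<sigma> :: "('i, 's) strategy"
  assumes finJ: "finite J"
    and FJ: "F \<subseteq> Pow J" and emF: "{} \<in> F" and downF: "\<forall>I\<in>F. \<forall>I'. I' \<subseteq> I \<longrightarrow> I' \<in> F"
    and cvx: "convex_fun_set PF" and PF01: "\<forall>x\<in>PF. \<forall>i\<in>J. 0 \<le> x i \<and> x i \<le> 1"
    and indPF: "\<forall>I\<in>F. indicator I \<in> PF"
    and dag: "\<forall>i\<in>J. dag_markov_system (V i) (P i) (s i) (T i) (price i) (val i)"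
    and valid: "valid_strategy J F P s T \<sigma>"
begin

abbreviation "Z \<equiv> occ V P s \<sigma>"
abbreviation "c h \<equiv> config s h"
abbreviation "R i \<equiv> ms_arcs (V i) (P i) (T i)"

lemma finV: "i \<in> J \<Longrightarrow> finite (V i)"
  using dag by (auto simp: dag_markov_system_def markov_system_def)
lemma sV: "i \<in> J \<Longrightarrow> s i \<in> V i"
  using dag by (auto simp: dag_markov_system_def markov_system_def)
lemma TV: "i \<in> J \<Longrightarrow> T i \<subseteq> V i"
  using dag by (auto simp: dag_markov_system_def markov_system_def)
lemma finT: "i \<in> J \<Longrightarrow> finite (T i)"
  using finV TV finite_subset by blast
lemma Pnn: "i \<in> J \<Longrightarrow> u \<in> V i \<Longrightarrow> 0 \<le> P i u v"
  using dag by (auto simp: dag_markov_system_def markov_system_def)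
lemma Pout: "i \<in> J \<Longrightarrow> u \<in> V i \<Longrightarrow> v \<notin> V i \<Longrightarrow> P i u v = 0"
  using dag by (auto simp: dag_markov_system_def markov_system_def)
lemma Psum: "i \<in> J \<Longrightarrow> u \<in> V i \<Longrightarrow> (\<Sum>v\<in>V i. P i u v) = 1"
  using dag by (auto simp: dag_markov_system_def markov_system_def)
lemma acyc: "i \<in> J \<Longrightarrow> acyclic (R i)"
  using dag by (auto simp: dag_markov_system_def)

lemma valid_at: "h \<in> reachable_hist P s \<sigma> \<Longrightarrow>
   (case \<sigma> h of Advance i \<Rightarrow> i \<in> J \<and> c h i \<notin> T i
         | Select I \<Rightarrow> I \<in> F \<and> (\<forall>i\<in>I. c h i \<in> T i))"
  using valid by (auto simp: valid_strategy_def)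

lemma adv: "h \<in> reachable_hist P s \<sigma> \<Longrightarrow> \<sigma> h = Advance j \<Longrightarrow> j \<in> J \<and> c h j \<notin> T j"
  using valid_at[of h] by simp

lemma sel: "h \<in> reachable_hist P s \<sigma> \<Longrightarrow> \<sigma> h = Select I \<Longrightarrow> I \<in> F \<and> I \<subseteq> J \<and> (\<forall>i\<in>I. c h i \<in> T i)"
  using valid_at[of h] FJ by auto

lemma cV: "h \<in> reachable_hist P s \<sigma> \<Longrightarrow> i \<in> J \<Longrightarrow> c h i \<in> V i"
proof (induction h arbitrary: i rule: reachable_hist.induct)
  case Nil
  then show ?case using sV by (simp add: config_Nil)
next
  case (Step h j v)
  have j: "j \<in> J" using adv Step by blast
  show ?case
  proof (cases "i = j")
    case True
    have "c h j \<in> V j" using Step j by blast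
    then have "v \<in> V j" using Pout[OF j] Step(3) by force
    then show ?thesis using True by (simp add: config_snoc)
  next
    case False
    then show ?thesis using Step by (simp add: config_snoc)
  qed
qed

lemma child: "h \<in> reachable_hist P s \<sigma> \<Longrightarrow> \<sigma> h = Advance j \<Longrightarrow> j \<in> J \<Longrightarrow>
   P j (c h j) v = 0 \<or> (P j (c h j) v > 0 \<and> h @ [(j, v)] \<in> reachable_hist P s \<sigma>)"
  using Pnn[of j "c h j" v] cV[of h j] reachable_hist.Step[of h P s \<sigma> j v] by force

lemma Znn: "h \<in> reachable_hist P s \<sigma> \<Longrightarrow> 0 \<le> Z n h i u"
proof (induction n arbitrary: h)
  case 0
  then show ?case by simp
next
  case (Suc n)
  show ?case
  proof (cases "\<sigma> h")
    case (Advance j)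
    have j: "j \<in> J" using adv Suc Advance by blast
    have "0 \<le> P j (c h j) v * Z n (h @ [(j, v)]) i u" for v
      using child[OF Suc.prems Advance j, of v] Suc.IH by force
    then show ?thesis using Advance by (simp add: sum_nonneg)
  next
    case (Select I)
    then show ?thesis by simp
  qed
qed


lemma Zreach: "h \<in> reachable_hist P s \<sigma> \<Longrightarrow> i \<in> J \<Longrightarrow> Z n h i u \<noteq> 0 \<Longrightarrow> (c h i, u) \<in> (R i)\<^sup>*"
proof (induction n arbitrary: h)
  case 0
  then show ?case by simp
next
  case (Suc n)
  show ?case
  proof (cases "\<sigma> h")
    case (Advance j)
    have j: "j \<in> J" and wT: "c h j \<notin> T j" using adv Suc Advance by blast+
    have wV: "c h j \<in> V j" using cV Suc j by blast
    show ?thesis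
    proof (cases "i = j \<and> u = c h j")
      case True
      then show ?thesis by simp
    next
      case False
      then have "(\<Sum>v\<in>V j. P j (c h j) v * Z n (h @ [(j, v)]) i u) \<noteq> 0"
        using Suc.prems Advance by (auto split: if_splits)
      then obtain v where v: "v \<in> V j" "P j (c h j) v * Z n (h @ [(j, v)]) i u \<noteq> 0"
        using sum.not_neutral_contains_not_neutral by blast
      then have pos: "P j (c h j) v > 0" and r: "h @ [(j, v)] \<in> reachable_hist P s \<sigma>"
        using child[OF Suc.prems(1) Advance j, of v] by auto
      have IH: "(c (h @ [(j, v)]) i, u) \<in> (R i)\<^sup>*" using Suc.IH[OF r Suc.prems(2)] v by simp
      show ?thesis
      proof (cases "i = j")
        case True
        have "(c h j, v) \<in> R j" using wV wT pos by (simp add: ms_arcs_def)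
        then show ?thesis using IH True by (simp add: config_snoc)
      next
        case False
        then show ?thesis using IH by (simp add: config_snoc)
      qed
    qed
  next
    case (Select I)
    then show ?thesis using Suc.prems by (auto split: if_splits)
  qed
qed

lemma Zflow: "h \<in> reachable_hist P s \<sigma> \<Longrightarrow> i \<in> J \<Longrightarrow> u \<in> V i \<Longrightarrow>
   Z n h i u \<le> (if u = c h i then 1 else 0) + (\<Sum>x\<in>V i - T i. P i x u * Z n h i x)"
proof (induction n arbitrary: h)
  case 0
  then show ?case by simp
next
  case (Suc n)
  have SN: "0 \<le> (\<Sum>x\<in>V i - T i. P i x u * Z m h i x)" for m
    using Pnn[OF Suc.prems(2)] Znn[OF Suc.prems(1)] by (intro sum_nonneg) (simp add: mult_nonneg_nonneg)
  show ?case
  proof (cases "\<sigma> h")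
    case (Advance j)
    have j: "j \<in> J" and wT: "c h j \<notin> T j" using adv Suc Advance by blast+
    have wV: "c h j \<in> V j" using cV Suc j by blast
    define w where "w = c h j"
    define Zc where "Zc v = Z n (h @ [(j, v)])" for v
    have ZS: "Z (Suc n) h i x = (if i = j \<and> x = w then 1 else 0) + (\<Sum>v\<in>V j. P j w v * Zc v i x)" for x
      using Advance by (simp add: w_def Zc_def)
    have step: "P j w v * Zc v i u \<le> P j w v * ((if u = ((c h)(j := v)) i then 1 else 0)
          + (\<Sum>x\<in>V i - T i. P i x u * Zc v i x))" if "v \<in> V j" for v
    proof -
      from child[OF Suc.prems(1) Advance j, of v]
      show ?thesis
      proof
        assume "P j (c h j) v = 0" then show ?thesis by (simp add: w_def)
      next
        assume a: "0 < P j (c h j) v \<and> h @ [(j, v)] \<in> reachable_hist P s \<sigma>"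
        have "Zc v i u \<le> (if u = ((c h)(j := v)) i then 1 else 0) + (\<Sum>x\<in>V i - T i. P i x u * Zc v i x)"
          using Suc.IH[of "h @ [(j, v)]"] a Suc.prems by (simp add: Zc_def config_snoc)
        then show ?thesis using a by (simp add: w_def mult_left_mono)
      qed
    qed
    have "(\<Sum>v\<in>V j. P j w v * Zc v i u) \<le> (\<Sum>v\<in>V j. P j w v * ((if u = ((c h)(j := v)) i then 1 else 0)
          + (\<Sum>x\<in>V i - T i. P i x u * Zc v i x)))"
      using step by (rule sum_mono)
    also have "\<dots> = (\<Sum>v\<in>V j. P j w v * (if u = ((c h)(j := v)) i then 1 else 0))
          + (\<Sum>x\<in>V i - T i. P i x u * (\<Sum>v\<in>V j. P j w v * Zc v i x))"
      by (simp add: distrib_left sum.distrib sum_distrib_left sum.swap[of _ "V j"] mult.left_commute)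
    also have "(\<Sum>x\<in>V i - T i. P i x u * (\<Sum>v\<in>V j. P j w v * Zc v i x))
        = (\<Sum>x\<in>V i - T i. P i x u * Z (Suc n) h i x) - (\<Sum>x\<in>V i - T i. P i x u * (if i = j \<and> x = w then 1 else 0))"
      by (simp only: ZS) (simp add: algebra_simps sum_subtractf[symmetric])
    finally have A: "(\<Sum>v\<in>V j. P j w v * Zc v i u) \<le> (\<Sum>v\<in>V j. P j w v * (if u = ((c h)(j := v)) i then 1 else 0))
        + ((\<Sum>x\<in>V i - T i. P i x u * Z (Suc n) h i x) - (\<Sum>x\<in>V i - T i. P i x u * (if i = j \<and> x = w then 1 else 0)))" .
    show ?thesis
    proof (cases "i = j")
      case True
      have e1: "(\<Sum>v\<in>V j. P j w v * (if u = ((c h)(j := v)) i then 1 else 0)) = P j w u"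
        using True Suc.prems(3) finV[OF j] by (simp add: if_distrib cong: if_cong)
      have e2: "(\<Sum>x\<in>V i - T i. P i x u * (if i = j \<and> x = w then 1 else 0)) = P j w u"
        using True wV wT finV[OF j] by (simp add: w_def if_distrib cong: if_cong)
      show ?thesis using A e1 e2 ZS[of u] True by (simp add: w_def)
    next
      case False
      have e1: "(\<Sum>v\<in>V j. P j w v * (if u = ((c h)(j := v)) i then 1 else 0)) = (if u = c h i then 1 else 0)"
        using False Psum[OF j wV] by (simp add: w_def)
      have e2: "(\<Sum>x\<in>V i - T i. P i x u * (if i = j \<and> x = w then 1 else 0)) = 0"
        using False by simp
      show ?thesis using A e1 e2 ZS[of u] False by simp
    qed
  next
    case (Select I)
    then have "Z (Suc n) h i u \<le> (if u = c h i then 1 else 0)" by simp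
    then show ?thesis using SN[of "Suc n"] by linarith
  qed
qed


lemma Zutil: "h \<in> reachable_hist P s \<sigma> \<Longrightarrow>
   util_fuel V P s price val \<sigma> n h = lp_objective J V T price val (Z n h)"
proof (induction n arbitrary: h)
  case 0
  then show ?case by (simp add: lp_objective_def)
next
  case (Suc n)
  show ?case
  proof (cases "\<sigma> h")
    case (Advance j)
    have j: "j \<in> J" and wT: "c h j \<notin> T j" using adv Suc Advance by blast+
    have wV: "c h j \<in> V j" using cV Suc j by blast
    define w where "w = c h j"
    have e: "lp_objective J V T price val (\<lambda>i u. if i = j \<and> u = w then 1 else 0) = - price j w"
    proof -
      have "lp_objective J V T price val (\<lambda>i u. if i = j \<and> u = w then 1 else 0)
          = (\<Sum>i\<in>J. if i = j then - price j w else 0)"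
        unfolding lp_objective_def
      proof (rule sum.cong[OF refl])
        fix i assume "i \<in> J"
        show "(\<Sum>u\<in>T i. val i u * (if i = j \<and> u = w then 1 else 0)) -
          (\<Sum>u\<in>V i - T i. price i u * (if i = j \<and> u = w then 1 else 0)) = (if i = j then - price j w else 0)"
          using wT wV finV[OF j] finT[OF j] by (simp add: w_def if_distrib cong: if_cong)
      qed
      also have "\<dots> = - price j w" using j finJ by simp
      finally show ?thesis .
    qed
    have t: "P j w v * util_fuel V P s price val \<sigma> n (h @ [(j, v)])
        = P j w v * lp_objective J V T price val (Z n (h @ [(j, v)]))" for v
      using child[OF Suc.prems Advance j, of v] Suc.IH by (auto simp: w_def)
    have ts: "(\<Sum>v\<in>V j. P j w v * util_fuel V P s price val \<sigma> n (h @ [(j, v)]))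
        = (\<Sum>v\<in>V j. P j w v * lp_objective J V T price val (Z n (h @ [(j, v)])))"
      by (rule sum.cong[OF refl t])
    have "util_fuel V P s price val \<sigma> (Suc n) h = - price j w +
        (\<Sum>v\<in>V j. P j w v * lp_objective J V T price val (Z n (h @ [(j, v)])))"
      using Advance ts by (simp add: w_def)
    also have "\<dots> = lp_objective J V T price val (Z (Suc n) h)"
      using Advance obj_lin[OF finV[OF j], of J V T price val "\<lambda>i u. if i = j \<and> u = w then 1 else 0"
          "P j w" "\<lambda>v. Z n (h @ [(j, v)])"] e
      by (simp add: w_def)
    finally show ?thesis .
  next
    case (Select I)
    have I: "I \<subseteq> J" "\<forall>i\<in>I. c h i \<in> T i" using sel Suc Select by blast+
    have "lp_objective J V T price val (Z (Suc n) h) = (\<Sum>i\<in>J. if i \<in> I then val i (c h i) else 0)"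
      unfolding lp_objective_def
    proof (rule sum.cong[OF refl])
      fix i assume iJ: "i \<in> J"
      show "(\<Sum>u\<in>T i. val i u * Z (Suc n) h i u) - (\<Sum>u\<in>V i - T i. price i u * Z (Suc n) h i u) =
         (if i \<in> I then val i (c h i) else 0)"
        using Select I finV[OF iJ] finT[OF iJ] by (simp add: if_distrib cong: if_cong)
    qed
    also have "\<dots> = (\<Sum>i\<in>I. val i (c h i))"
      using I finJ by (simp add: sum.If_cases Int_absorb1)
    finally show ?thesis using Select by simp
  qed
qed

lemma ZPF: "h \<in> reachable_hist P s \<sigma> \<Longrightarrow> (\<lambda>i. \<Sum>u\<in>T i. Z n h i u) \<in> PF"
proof (induction n arbitrary: h)
  case 0
  have "indicator {} \<in> PF" using indPF emF by blast
  moreover have "(indicator {} :: 'i \<Rightarrow> real) = (\<lambda>i. \<Sum>u\<in>T i. Z 0 h i u)" by (simp add: fun_eq_iff)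
  ultimately show ?case by simp
next
  case (Suc n)
  show ?case
  proof (cases "\<sigma> h")
    case (Advance j)
    have j: "j \<in> J" and wT: "c h j \<notin> T j" using adv Suc Advance by blast+
    have wV: "c h j \<in> V j" using cV Suc j by blast
    define w where "w = c h j"
    have cc: "(\<lambda>i. \<Sum>v\<in>V j. P j w v * (\<Sum>u\<in>T i. Z n (h @ [(j, v)]) i u)) \<in> PF"
      using conv_comb[OF cvx finV[OF j], of "P j w" "\<lambda>v i. \<Sum>u\<in>T i. Z n (h @ [(j, v)]) i u"]
        Pnn[OF j wV] Psum[OF j wV] child[OF Suc.prems Advance j] Suc.IH
      by (force simp: w_def)
    have "(\<lambda>i. \<Sum>u\<in>T i. Z (Suc n) h i u) = (\<lambda>i. \<Sum>v\<in>V j. P j w v * (\<Sum>u\<in>T i. Z n (h @ [(j, v)]) i u))"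
    proof
      fix i
      have "(\<Sum>u\<in>T i. (if i = j \<and> u = w then 1 else 0 :: real)) = 0"
        using wT by (intro sum.neutral) (auto simp: w_def)
      then show "(\<Sum>u\<in>T i. Z (Suc n) h i u) = (\<Sum>v\<in>V j. P j w v * (\<Sum>u\<in>T i. Z n (h @ [(j, v)]) i u))"
        using Advance by (simp add: w_def sum.distrib sum_distrib_left sum.swap[of _ "T i"])
    qed
    then show ?thesis using cc by simp
  next
    case (Select I)
    have I: "I \<in> F" "I \<subseteq> J" "\<forall>i\<in>I. c h i \<in> T i" using sel Suc Select by blast+
    have "(\<lambda>i. \<Sum>u\<in>T i. Z (Suc n) h i u) = indicator I"
    proof
      fix i
      show "(\<Sum>u\<in>T i. Z (Suc n) h i u) = indicator I i"
      proof (cases "i \<in> I")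
        case True
        then have "i \<in> J" using I by blast
        then show ?thesis using True I Select finT by (simp add: if_distrib cong: if_cong)
      next
        case False
        then show ?thesis using Select by simp
      qed
    qed
    then show ?thesis using indPF I by simp
  qed
qed

lemma root_bound: "i \<in> J \<Longrightarrow> Z n [] i (s i) \<le> 1"
proof -
  assume iJ: "i \<in> J"
  have r: "[] \<in> reachable_hist P s \<sigma>" by (rule reachable_hist.Nil)
  have fl: "Z n [] i (s i) \<le> 1 + (\<Sum>x\<in>V i - T i. P i x (s i) * Z n [] i x)"
    using Zflow[OF r iJ sV[OF iJ]] by (simp add: config_Nil)
  have "P i x (s i) * Z n [] i x = 0" if x: "x \<in> V i - T i" for x
  proof (rule ccontr)
    assume ne: "P i x (s i) * Z n [] i x \<noteq> 0"
    then have "P i x (s i) > 0" using Pnn[OF iJ, of x "s i"] x by force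
    then have a: "(x, s i) \<in> R i" using x by (simp add: ms_arcs_def)
    have "(s i, x) \<in> (R i)\<^sup>*" using Zreach[OF r iJ, of n x] ne by (simp add: config_Nil)
    then have "(s i, s i) \<in> (R i)\<^sup>+" using a by simp
    then show False using acyc[OF iJ] by (simp add: acyclic_def)
  qed
  then have "(\<Sum>x\<in>V i - T i. P i x (s i) * Z n [] i x) = 0" by (intro sum.neutral) blast
  then show ?thesis using fl by simp
qed


lemma main: "ereal (utility J V P s price val \<sigma>)
           \<le> (SUP p \<in> lp_feasible J V P s T PF. ereal (lp_objective J V T price val (snd (snd p))))"
proof -
  define N where "N = Suc (\<Sum>i\<in>J. card (V i))"
  define z where "z = Z N []"
  define x where "x = (\<lambda>i. \<Sum>u\<in>T i. z i u)"
  define y where "y = (\<lambda>i u. if u = s i then 1 else (\<Sum>v\<in>V i - T i. P i v u * z i v))"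
  have r: "[] \<in> reachable_hist P s \<sigma>" by (rule reachable_hist.Nil)
  have zn: "0 \<le> z i u" for i u using Znn[OF r] by (simp add: z_def)
  have yn: "i \<in> J \<Longrightarrow> 0 \<le> y i u" for i u
    using zn Pnn by (auto simp: y_def intro!: sum_nonneg)
  have zy: "z i u \<le> y i u" if "i \<in> J" "u \<in> V i" for i u
  proof (cases "u = s i")
    case True then show ?thesis using root_bound[OF that(1)] by (simp add: y_def z_def)
  next
    case False then show ?thesis using Zflow[OF r that] by (simp add: y_def z_def config_Nil)
  qed
  have feas: "(x, y, z) \<in> lp_feasible J V P s T PF"
    unfolding lp_feasible_def
    using zy yn zn ZPF[OF r, of N]
    by (auto simp: x_def y_def z_def intro!: sum_nonneg)
  have "utility J V P s price val \<sigma> = lp_objective J V T price val z"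
    unfolding utility_def z_def N_def by (rule Zutil[OF r])
  then have "ereal (utility J V P s price val \<sigma>) = ereal (lp_objective J V T price val (snd (snd (x, y, z))))"
    by simp
  also have "\<dots> \<le> (SUP p \<in> lp_feasible J V P s T PF. ereal (lp_objective J V T price val (snd (snd p))))"
    using feas by (rule SUP_upper)
  finally show ?thesis .
qed

end

theorem lemma5:
  fixes J :: "'i set" and F :: "'i set set" and PF :: "('i \<Rightarrow> real) set"
    and V :: "'i \<Rightarrow> 's set" and P :: "'i \<Rightarrow> 's \<Rightarrow> 's \<Rightarrow> real" and s :: "'i \<Rightarrow> 's"
    and T :: "'i \<Rightarrow> 's set" and price val :: "'i \<Rightarrow> 's \<Rightarrow> real"
    and \<sigma> :: "('i, 's) strategy"
  assumes "finite J"
    and "F \<subseteq> Pow J" and "{} \<in> F" and "\<forall>I\<in>F. \<forall>I'. I' \<subseteq> I \<longrightarrow> I' \<in> F"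
    and "convex_fun_set PF" and "\<forall>x\<in>PF. \<forall>i\<in>J. 0 \<le> x i \<and> x i \<le> 1"
    and "\<forall>I\<in>F. indicator I \<in> PF"
    and "\<forall>i\<in>J. dag_markov_system (V i) (P i) (s i) (T i) (price i) (val i)"
    and "valid_strategy J F P s T \<sigma>"
  shows "ereal (utility J V P s price val \<sigma>)
           \<le> (SUP p \<in> lp_feasible J V P s T PF. ereal (lp_objective J V T price val (snd (snd p))))"
proof -
  interpret lpset J F PF V P s T price val \<sigma>
    using assms unfolding lpset_def by blast
  show ?thesis by (rule main)
qed

end
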